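(* Let $f(x,y)=\left(x+\frac1y,\ y-\frac1y-x\right)$ be the Hénon–Devaney map, with inverse $f^{-1}(u,v)=\left(u-\frac{1}{u+v},\ u+v\right)$ defined for $u+v\neq0$. For $n\ge1$ let $T_n$ be the set of $t\in\mathbb{R}$ such that $f^{-k}(t,0)$ is defined and does not lie on the line $\{y=-x\}$ for every $k=0,1,\dots,n-1$ (so that $f^{-n}(t,0)$ is defined), and write $f^{-n}(t,0)=(f^{-n}_x(t,0),f^{-n}_y(t,0))$. Then for every $n\ge1$: (a) on each connected component of $T_n$, both functions $t\mapsto f^{-n}_x(t,0)$ and $t\mapsto f^{-n}_y(t,0)$ are increasing; (b) $f^{-(n-1)}(\{y=0\})\cap f^{-n}(\{y=0\})=\emptyset$, where $f^{-k}(\{y=0\})=\{f^{-k}(t,0): t\in T_k\}$ for $k\ge1$ and $f^{0}(\{y=0\})=\{y=0\}$. *)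

theory Defs
  imports "HOL-Analysis.Analysis"
begin

definition hd_map :: "real \<times> real \<Rightarrow> real \<times> real" where
  "hd_map p = (fst p + 1 / snd p, snd p - 1 / snd p - fst p)"

definition hd_inv :: "real \<times> real \<Rightarrow> real \<times> real" where
  "hd_inv p = (fst p - 1 / (fst p + snd p), fst p + snd p)"

definition hd_inv_iter :: "nat \<Rightarrow> real \<times> real \<Rightarrow> real \<times> real" where
  "hd_inv_iter k = hd_inv ^^ k"

definition T_set :: "nat \<Rightarrow> real set" where
  "T_set n = {t. \<forall>k<n. fst (hd_inv_iter k (t, 0)) + snd (hd_inv_iter k (t, 0)) \<noteq> 0}"

text \<open>f^{-k}({y=0}); for k = 0 this is the line {y = 0} since T_0 = UNIV.\<close>
definition preimage_line :: "nat \<Rightarrow> (real \<times> real) set" where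
  "preimage_line k = {hd_inv_iter k (t, 0) | t. t \<in> T_set k}"

end

theory Submission
  imports Defs
begin

lemma it_Suc: "hd_inv_iter (Suc k) p = hd_inv (hd_inv_iter k p)"
  by (simp add: hd_inv_iter_def)

lemma X_Suc: "fst (hd_inv_iter (Suc k) p) = fst (hd_inv_iter k p) - 1 / (fst (hd_inv_iter k p) + snd (hd_inv_iter k p))"
  by (simp add: it_Suc hd_inv_def)

lemma Y_Suc: "snd (hd_inv_iter (Suc k) p) = fst (hd_inv_iter k p) + snd (hd_inv_iter k p)"
  by (simp add: it_Suc hd_inv_def)

lemma cont_it:
  "k \<le> n \<Longrightarrow> continuous_on (T_set n) (\<lambda>t. fst (hd_inv_iter k (t, 0))) \<and>
     continuous_on (T_set n) (\<lambda>t. snd (hd_inv_iter k (t, 0)))"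
proof (induction k)
  case 0
  then show ?case by (simp add: hd_inv_iter_def continuous_on_id)
next
  case (Suc k)
  then have IH: "continuous_on (T_set n) (\<lambda>t. fst (hd_inv_iter k (t, 0)))"
    "continuous_on (T_set n) (\<lambda>t. snd (hd_inv_iter k (t, 0)))" by auto
  have nz: "\<forall>t\<in>T_set n. fst (hd_inv_iter k (t, 0)) + snd (hd_inv_iter k (t, 0)) \<noteq> 0"
    using Suc.prems by (auto simp: T_set_def)
  show ?case unfolding X_Suc Y_Suc
    using IH nz by (auto intro!: continuous_intros)
qed

lemma mono_it:
  assumes "connected C" "C \<subseteq> T_set n"
  shows "k \<le> n \<Longrightarrow> a \<in> C \<Longrightarrow> b \<in> C \<Longrightarrow> a < b \<Longrightarrow>
     fst (hd_inv_iter k (a, 0)) < fst (hd_inv_iter k (b, 0)) \<and>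
     snd (hd_inv_iter k (a, 0)) \<le> snd (hd_inv_iter k (b, 0))"
proof (induction k arbitrary: a b)
  case 0
  then show ?case by (simp add: hd_inv_iter_def)
next
  case (Suc k)
  define s where "s = (\<lambda>t. fst (hd_inv_iter k (t, 0)) + snd (hd_inv_iter k (t, 0)))"
  have "fst (hd_inv_iter k (a, 0)) < fst (hd_inv_iter k (b, 0)) \<and>
     snd (hd_inv_iter k (a, 0)) \<le> snd (hd_inv_iter k (b, 0))" using Suc.IH Suc.prems by simp
  then have lt: "s a < s b" by (simp add: s_def)
  have cs: "continuous_on C s" unfolding s_def
    using cont_it[of k n] Suc.prems(1) assms(2)
    by (intro continuous_on_add; auto intro: continuous_on_subset)
  have nz: "\<forall>t\<in>C. s t \<noteq> 0" using Suc.prems(1) assms(2) by (auto simp: T_set_def s_def)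
  have conn: "connected (s ` C)" using connected_continuous_image[OF cs assms(1)] .
  have sign: "s a > 0 \<or> s b < 0"
  proof (rule ccontr)
    assume "\<not> ?thesis"
    then have "s a \<le> 0" "0 \<le> s b" by auto
    then have "0 \<in> s ` C" using conn Suc.prems(2,3) unfolding connected_iff_interval
      by (meson imageI)
    then show False using nz by auto
  qed
  have "1 / s b < 1 / s a"
  proof (cases "s a > 0")
    case True then show ?thesis using lt by (simp add: frac_less2)
  next
    case False then have "s b < 0" using sign by auto
    then show ?thesis using lt by (simp add: divide_less_eq)
  qed
  moreover have "fst (hd_inv_iter k (a, 0)) < fst (hd_inv_iter k (b, 0))"
    using Suc by auto
  ultimately show ?case unfolding X_Suc Y_Suc using lt unfolding s_def by linarith
qed

lemma inj_hd_inv: "inj hd_inv"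
proof (rule injI)
  fix p q assume h: "hd_inv p = hd_inv q"
  obtain u v where p: "p = (u, v)" by (cases p)
  obtain u' v' where q: "q = (u', v')" by (cases q)
  from h have e1: "u - 1/(u+v) = u' - 1/(u'+v')" and e2: "u + v = u' + v'"
    by (auto simp: hd_inv_def p q)
  then have "u = u'" by simp
  then show "p = q" using e2 p q by simp
qed

theorem mainTheorem3:
  fixes n :: nat
  assumes "n \<ge> 1"
  shows "(\<forall>C \<in> components (T_set n).
            strict_mono_on C (\<lambda>t. fst (hd_inv_iter n (t, 0))) \<and>
            strict_mono_on C (\<lambda>t. snd (hd_inv_iter n (t, 0))))
         \<and> preimage_line (n - 1) \<inter> preimage_line n = {}"
proof
  obtain m where n: "n = Suc m" using assms by (cases n) auto
  show "\<forall>C \<in> components (T_set n).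
            strict_mono_on C (\<lambda>t. fst (hd_inv_iter n (t, 0))) \<and>
            strict_mono_on C (\<lambda>t. snd (hd_inv_iter n (t, 0)))"
  proof
    fix C assume C: "C \<in> components (T_set n)"
    have cc: "connected C" "C \<subseteq> T_set n"
      using in_components_connected[OF C] in_components_subset[OF C] by auto
    show "strict_mono_on C (\<lambda>t. fst (hd_inv_iter n (t, 0))) \<and>
            strict_mono_on C (\<lambda>t. snd (hd_inv_iter n (t, 0)))"
    proof
      show "strict_mono_on C (\<lambda>t. fst (hd_inv_iter n (t, 0)))"
        using mono_it[OF cc, of n] by (auto intro!: strict_mono_onI)
      show "strict_mono_on C (\<lambda>t. snd (hd_inv_iter n (t, 0)))"
      proof (rule strict_mono_onI)
        fix r s assume "r \<in> C" "s \<in> C" "r < s"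
        then show "snd (hd_inv_iter n (r, 0)) < snd (hd_inv_iter n (s, 0))"
          using mono_it[OF cc, of m r s] unfolding n Y_Suc by auto
      qed
    qed
  qed
  show "preimage_line (n - 1) \<inter> preimage_line n = {}"
  proof (rule ccontr)
    assume "preimage_line (n - 1) \<inter> preimage_line n \<noteq> {}"
    then obtain p where p: "p \<in> preimage_line m" "p \<in> preimage_line n" using n by auto
    from p(1) obtain t where e1: "p = hd_inv_iter m (t, 0)" unfolding preimage_line_def by blast
    from p(2) obtain t' where e2: "p = hd_inv_iter n (t', 0)" and t': "t' \<in> T_set n"
      unfolding preimage_line_def by blast
    from e1 e2 have e: "hd_inv_iter m (t, 0) = hd_inv_iter n (t', 0)" by simp
    have "hd_inv_iter n (t', 0) = hd_inv_iter m (hd_inv (t', 0))"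
      unfolding n hd_inv_iter_def by (simp only: funpow_Suc_right comp_def)
    with e have "(t, 0) = hd_inv (t', 0)"
      using inj_fn[OF inj_hd_inv, of m] unfolding hd_inv_iter_def by (auto dest: injD)
    then have "t' = 0" by (simp add: hd_inv_def)
    moreover have "fst (hd_inv_iter 0 (t', 0)) + snd (hd_inv_iter 0 (t', 0)) \<noteq> 0"
      using t' unfolding T_set_def n by blast
    ultimately show False by (simp add: hd_inv_iter_def)
  qed
qed

end
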